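(* Let $M$ be a monoid with identity $1$, and let $R_1=\{f\in M: fM=M\}$ be the $\mathcal{R}$-class of $1$ (the set of elements having a right inverse). If $M-R_1\neq\emptyset$ and $R_1\neq\{1\}$, then $\sigma_m(M)=\sigma_m^*(M)=\sigma_s(M)=2$.
   Context: A subsemigroup is a nonempty subset closed under the operation. For a monoid $M$: a submonoid is a subsemigroup containing the identity of $M$; a monoidal subsemigroup is a subsemigroup that is a monoid in its own right (its identity need not be that of $M$). $\sigma_s(M)$, $\sigma_m(M)$, $\sigma_m^*(M)$ denote the least positive integer $n$ such that $M$ is the union of $n$ proper subsemigroups, proper submonoids, respectively proper monoidal subsemigroups, or $\infty$ if no such finite $n$ exists. *)

theory Defs
  imports Main "HOL-Library.Extended_Nat"
begin

text \<open>The monoid M is modelled as a type of class monoid_mult (carrier = UNIV).\<close>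

definition subsemigroup :: "'a::monoid_mult set \<Rightarrow> bool" where
  "subsemigroup S \<longleftrightarrow> S \<noteq> {} \<and> (\<forall>x\<in>S. \<forall>y\<in>S. x * y \<in> S)"

definition submonoid :: "'a::monoid_mult set \<Rightarrow> bool" where
  "submonoid S \<longleftrightarrow> subsemigroup S \<and> 1 \<in> S"

definition monoidal_subsemigroup :: "'a::monoid_mult set \<Rightarrow> bool" where
  "monoidal_subsemigroup S \<longleftrightarrow> subsemigroup S \<and> (\<exists>e\<in>S. \<forall>x\<in>S. e * x = x \<and> x * e = x)"

text \<open>Least positive n such that UNIV is the union of n proper sets satisfying P; infinity if none.\<close>
definition cover_number :: "('a set \<Rightarrow> bool) \<Rightarrow> enat" where
  "cover_number P = Inf {enat n | n. n > 0 \<and>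
     (\<exists>S :: nat \<Rightarrow> 'a set. (\<forall>i<n. P (S i) \<and> S i \<noteq> UNIV) \<and> (\<Union>i<n. S i) = UNIV)}"

definition sigma_s :: "'a::monoid_mult itself \<Rightarrow> enat" where
  "sigma_s _ = cover_number (subsemigroup :: 'a set \<Rightarrow> bool)"

definition sigma_m :: "'a::monoid_mult itself \<Rightarrow> enat" where
  "sigma_m _ = cover_number (submonoid :: 'a set \<Rightarrow> bool)"

definition sigma_m_star :: "'a::monoid_mult itself \<Rightarrow> enat" where
  "sigma_m_star _ = cover_number (monoidal_subsemigroup :: 'a set \<Rightarrow> bool)"

definition R_one :: "'a::monoid_mult set" where
  "R_one = {f. range (\<lambda>x. f * x) = UNIV}"

end

theory Submission
  imports Defs
begin

lemma cover2:
  assumes "P A" "P B" "A \<noteq> UNIV" "B \<noteq> UNIV" "A \<union> B = UNIV"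
  shows "cover_number P = 2"
  unfolding cover_number_def
proof (rule antisym)
  let ?S = "\<lambda>i::nat. if i = 0 then A else B"
  have "(\<forall>i<2. P (?S i) \<and> ?S i \<noteq> UNIV) \<and> (\<Union>i<2. ?S i) = UNIV"
  proof -
    have e: "{..<2::nat} = {0,1}" by auto
    show ?thesis using assms unfolding e by (simp add: Un_commute)
  qed
  hence ex: "\<exists>S :: nat \<Rightarrow> 'a set. (\<forall>i<2. P (S i) \<and> S i \<noteq> UNIV) \<and> (\<Union>i<2. S i) = UNIV"
    by (rule exI[of _ ?S])
  have mem: "enat 2 \<in> {enat n |n. n > 0 \<and> (\<exists>S :: nat \<Rightarrow> 'a set. (\<forall>i<n. P (S i) \<and> S i \<noteq> UNIV) \<and> (\<Union>i<n. S i) = UNIV)}"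
    using ex by (intro CollectI exI[of _ 2] conjI) simp_all
  show "Inf {enat n |n. n > 0 \<and> (\<exists>S :: nat \<Rightarrow> 'a set. (\<forall>i<n. P (S i) \<and> S i \<noteq> UNIV) \<and> (\<Union>i<n. S i) = UNIV)} \<le> 2"
  proof -
    have "(2::enat) = enat 2" by (simp add: numeral_eq_enat)
    with Inf_lower[OF mem] show ?thesis by simp
  qed
next
  show "2 \<le> Inf {enat n |n. n > 0 \<and> (\<exists>S :: nat \<Rightarrow> 'a set. (\<forall>i<n. P (S i) \<and> S i \<noteq> UNIV) \<and> (\<Union>i<n. S i) = UNIV)}"
  proof (rule Inf_greatest, clarify)
    fix n :: nat and S :: "nat \<Rightarrow> 'a set"
    assume h: "n > 0" "\<forall>i<n. P (S i) \<and> S i \<noteq> UNIV" "(\<Union>i<n. S i) = UNIV"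
    have "n \<noteq> 1"
    proof
      assume "n = 1"
      with h show False by (auto simp: lessThan_Suc)
    qed
    with h have "n \<ge> 2" by simp
    thus "2 \<le> enat n" by (simp add: numeral_eq_enat)
  qed
qed

lemma R_one_iff: "f \<in> R_one \<longleftrightarrow> (\<exists>g. f * g = (1::'a::monoid_mult))"
proof
  assume "f \<in> R_one"
  then have "1 \<in> range (\<lambda>x. f * x)" by (simp add: R_one_def)
  thus "\<exists>g. f * g = 1" by (metis imageE)
next
  assume "\<exists>g. f * g = 1"
  then obtain g where g: "f * g = 1" by blast
  have "y \<in> range (\<lambda>x. f * x)" for y
  proof -
    have "f * (g * y) = y" using g by (simp add: mult.assoc[symmetric])
    thus ?thesis by (metis rangeI)
  qed
  thus "f \<in> R_one" by (auto simp: R_one_def)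
qed

theorem mainTheorem18:
  assumes "(UNIV :: 'a::monoid_mult set) - R_one \<noteq> {}"
    and "(R_one :: 'a set) \<noteq> {1}"
  shows "sigma_m TYPE('a) = 2 \<and> sigma_m_star TYPE('a) = 2 \<and> sigma_s TYPE('a) = 2"
proof -
  let ?A = "R_one :: 'a set"
  let ?B = "(UNIV - R_one) \<union> {1::'a}"
  have oneA: "(1::'a) \<in> ?A" by (simp add: R_one_iff)
  have subA: "submonoid ?A"
    unfolding submonoid_def subsemigroup_def using oneA
  proof (intro conjI ballI)
    fix x y :: 'a assume "x \<in> ?A" "y \<in> ?A"
    then obtain g h where "x * g = 1" "y * h = 1" by (auto simp: R_one_iff)
    have "(x*y)*(h*g) = x*(y*h)*g" by (simp add: mult.assoc)
    hence "(x*y)*(h*g) = 1" using \<open>x * g = 1\<close> \<open>y * h = 1\<close> by simp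
    thus "x * y \<in> ?A" by (auto simp: R_one_iff)
  qed auto
  have subB: "submonoid ?B"
    unfolding submonoid_def subsemigroup_def
  proof (intro conjI ballI)
    fix x y :: 'a assume x: "x \<in> ?B" and y: "y \<in> ?B"
    show "x * y \<in> ?B"
    proof (cases "x = 1")
      case True thus ?thesis using y by simp
    next
      case False
      hence xn: "x \<notin> ?A" using x by blast
      have "x * y \<notin> ?A"
      proof
        assume "x * y \<in> ?A"
        then obtain g where "x*y*g = 1" by (auto simp: R_one_iff)
        hence "x*(y*g) = 1" by (simp add: mult.assoc)
        with xn show False by (auto simp: R_one_iff)
      qed
      thus ?thesis by blast
    qed
  qed auto
  have pA: "?A \<noteq> UNIV" using assms(1) by blast
  have pB: "?B \<noteq> UNIV"
  proof
    assume "?B = UNIV"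
    hence "?A \<subseteq> {1}" by blast
    with oneA assms(2) show False by blast
  qed
  have un: "?A \<union> ?B = UNIV" by blast
  have ms: "submonoid S \<Longrightarrow> monoidal_subsemigroup S" for S :: "'a set"
    unfolding submonoid_def monoidal_subsemigroup_def by (intro conjI bexI[of _ 1]) auto
  have ss: "submonoid S \<Longrightarrow> subsemigroup S" for S :: "'a set"
    unfolding submonoid_def by auto
  show ?thesis
    unfolding sigma_m_def sigma_m_star_def sigma_s_def
    using cover2[OF subA subB pA pB un] cover2[OF ms[OF subA] ms[OF subB] pA pB un]
      cover2[OF ss[OF subA] ss[OF subB] pA pB un] by simp
qed

end
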